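(* For every $i\in\{1,\dots,K\}$, $$\big\|\mathbb P(\tilde v_i\in\cdot)-\mathbb Q\big\|_{tv}\le \mathbb E\!\left(\min(pv_1,1)\,\frac{v_1}{V}\right).$$
   Context: Uniform urn model. Let $v$ be a random variable with values in the positive integers (number of balls of a given color), let $K\ge 1$, let $v_1,\dots,v_K$ be i.i.d. copies of $v$ (numbers of balls of colors $1,\dots,K$) and $V=v_1+\dots+v_K$. Fix a sampling fraction $p\in(0,1)$, with $pV$ assumed to be an integer. Conditionally on $\mathcal F=\{v_1,\dots,v_K\}$, $pV$ balls are drawn with replacement, independently, each drawn ball having color $i$ with probability $v_i/V$. Let $\tilde v_i$ denote the number of drawn balls of color $i$. Let $\mathbb Q$ be the probability distribution on $\{0,1,2,\dots\}$ given by $\mathbb Q_j=\mathbb E\big(\frac{(pv)^j}{j!}e^{-pv}\big)$, $j\ge0$. For integer-valued laws $\mu,\nu$, $\|\mu-\nu\|_{tv}=\sup_{A\subset\mathbb N}|\mu(A)-\nu(A)|=\frac12\sum_{n\ge0}|\mu(\{n\})-\nu(\{n\})|$. *)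

theory Defs
  imports "HOL-Probability.Probability"
begin

text \<open>Colours are indexed 0..K-1 (colour i of the paper is index i-1).
  The urn with ball numbers vs contains vs!i balls of colour i.\<close>
definition urn_balls :: "nat list \<Rightarrow> nat multiset" where
  "urn_balls vs = mset (concat (map (\<lambda>i. replicate (vs ! i) i) [0..<length vs]))"

definition urn_experiment :: "nat pmf \<Rightarrow> nat \<Rightarrow> real \<Rightarrow> (nat list \<times> nat list) pmf" where
  "urn_experiment D K p =
     do { vs \<leftarrow> replicate_pmf K D;
          ds \<leftarrow> replicate_pmf (nat \<lfloor>p * real (sum_list vs)\<rfloor>) (pmf_of_multiset (urn_balls vs));
          return_pmf (vs, ds) }"

definition drawn_count_law :: "nat pmf \<Rightarrow> nat \<Rightarrow> real \<Rightarrow> nat \<Rightarrow> nat pmf" where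
  "drawn_count_law D K p i = map_pmf (\<lambda>(vs, ds). count (mset ds) i) (urn_experiment D K p)"

definition mixed_poisson :: "nat pmf \<Rightarrow> real \<Rightarrow> nat \<Rightarrow> real" where
  "mixed_poisson D p j = measure_pmf.expectation D (\<lambda>v. (p * real v) ^ j / fact j * exp (- p * real v))"

definition tv_dist :: "nat pmf \<Rightarrow> (nat \<Rightarrow> real) \<Rightarrow> real" where
  "tv_dist \<mu> q = (1/2) * (\<Sum>n. \<bar>pmf \<mu> n - q n\<bar>)"

end

theory Submission
  imports Defs
begin


definition po :: "real \<Rightarrow> nat \<Rightarrow> real" where
  "po l r = l ^ r / fact r * exp (- l)"

definition FF :: "real \<Rightarrow> nat \<Rightarrow> real" where
  "FF l j = (\<Sum>r\<le>j. po l r)"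

definition TT :: "real \<Rightarrow> nat \<Rightarrow> real" where
  "TT l j = (\<Sum>s. po l (s + j))"

lemma po_pos: "l > 0 \<Longrightarrow> po l r > 0"
  by (simp add: po_def)

lemma po_Suc: "po l (Suc r) = po l r * l / real (Suc r)"
proof -
  have f: "(fact (Suc r)::real) = real (Suc r) * fact r" by simp
  have e: "l ^ Suc r / fact (Suc r) = (l^r / fact r) * (l / real (Suc r))"
    unfolding f power_Suc times_divide_times_eq by (simp only: mult.commute)
  show ?thesis unfolding po_def e by simp
qed

lemma po_sums: "po l sums 1"
proof -
  have "(\<lambda>n. l ^ n /\<^sub>R fact n) sums exp l" by (rule exp_converges)
  hence "(\<lambda>n. l ^ n / fact n) sums exp l" by (simp add: divide_inverse mult.commute)
  hence "(\<lambda>n. l ^ n / fact n * exp (-l)) sums (exp l * exp (-l))" by (rule sums_mult2)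
  thus ?thesis unfolding po_def[abs_def] by (simp add: exp_minus)
qed

lemma po_summable: "summable (po l)" using po_sums by (rule sums_summable)

lemma po_summable_shift: "summable (\<lambda>s. po l (s + j))"
  using po_summable summable_iff_shift by blast

lemma TT_split: "TT l j = po l j + TT l (Suc j)"
proof -
  have "(\<Sum>n. po l (Suc n + j)) = TT l j - po l (0 + j)"
    unfolding TT_def by (rule suminf_split_head[OF po_summable_shift])
  thus ?thesis by (simp add: TT_def)
qed

lemma FF_TT: "FF l j + TT l (Suc j) = 1"
proof -
  have "suminf (po l) = (\<Sum>n. po l (n + Suc j)) + (\<Sum>i<Suc j. po l i)"
    by (rule suminf_split_initial_segment[OF po_summable])
  moreover have "suminf (po l) = 1" using po_sums sums_unique by metis
  ultimately show ?thesis unfolding FF_def TT_def by (simp add: lessThan_Suc_atMost)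
qed

lemma FF_Suc: "FF l (Suc j) = FF l j + po l (Suc j)"
  by (simp add: FF_def)

lemma key: assumes "l > 0" "r \<le> m"
  shows "po l r * po l (Suc m) \<le> po l (Suc r) * po l m"
proof -
  have "po l r * po l (Suc m) = po l r * po l m * (l / real (Suc m))" by (simp add: po_Suc)
  also have "\<dots> \<le> po l r * po l m * (l / real (Suc r))"
    using assms po_pos[of l] by (intro mult_left_mono divide_left_mono) (auto intro: mult_nonneg_nonneg less_imp_le)
  also have "\<dots> = po l (Suc r) * po l m" by (simp add: po_Suc)
  finally show ?thesis .
qed

lemma FF_mono_ratio: assumes "l > 0"
  shows "FF l m * po l (Suc m) \<le> FF l (Suc m) * po l m"
proof -
  have "FF l m * po l (Suc m) = (\<Sum>r\<le>m. po l r * po l (Suc m))" by (simp add: FF_def sum_distrib_right)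
  also have "\<dots> \<le> (\<Sum>r\<le>m. po l (Suc r) * po l m)" by (rule sum_mono) (use key assms in auto)
  also have "\<dots> = (\<Sum>r\<le>m. po l (Suc r)) * po l m" by (simp add: sum_distrib_right)
  also have "(\<Sum>r\<le>m. po l (Suc r)) = FF l (Suc m) - po l 0"
    by (simp add: FF_def sum.atMost_Suc_shift del: sum.atMost_Suc)
  also have "(FF l (Suc m) - po l 0) * po l m \<le> FF l (Suc m) * po l m"
    using po_pos[OF assms] by (simp add: algebra_simps less_imp_le)
  finally show ?thesis .
qed

lemma TT_mono_ratio: assumes "l > 0"
  shows "TT l (Suc (Suc m)) * po l m \<le> TT l (Suc m) * po l (Suc m)"
proof -
  have s1: "summable (\<lambda>s. po l (s + Suc (Suc m)) * po l m)"
    by (intro summable_mult2 po_summable_shift)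
  have s2: "summable (\<lambda>s. po l (s + Suc m) * po l (Suc m))"
    by (intro summable_mult2 po_summable_shift)
  have "TT l (Suc (Suc m)) * po l m = (\<Sum>s. po l (s + Suc (Suc m)) * po l m)"
    unfolding TT_def by (rule suminf_mult2[OF po_summable_shift])
  also have "\<dots> \<le> (\<Sum>s. po l (s + Suc m) * po l (Suc m))"
  proof (rule suminf_le[OF _ s1 s2])
    fix s
    have "po l m * po l (Suc (s + Suc m)) \<le> po l (Suc m) * po l (s + Suc m)"
      by (rule key[OF assms]) simp
    thus "po l (s + Suc (Suc m)) * po l m \<le> po l (s + Suc m) * po l (Suc m)"
      by (simp add: mult.commute)
  qed
  also have "\<dots> = TT l (Suc m) * po l (Suc m)"
    unfolding TT_def by (rule suminf_mult2[OF po_summable_shift, symmetric])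
  finally show ?thesis .
qed

lemma diag_bound: assumes "l > 0"
  shows "l / real (Suc m) * FF l m \<le> FF l (Suc m) - po l 0"
proof -
  have "l / real (Suc m) * FF l m = (\<Sum>r\<le>m. po l r * (l / real (Suc m)))"
    unfolding FF_def sum_distrib_left by (simp add: mult.commute)
  also have "\<dots> \<le> (\<Sum>r\<le>m. po l r * (l / real (Suc r)))"
    using assms po_pos[OF assms] by (intro sum_mono mult_left_mono divide_left_mono) (auto intro: less_imp_le)
  also have "\<dots> = FF l (Suc m) - po l 0"
    by (simp add: FF_def sum.atMost_Suc_shift po_Suc sum_divide_distrib del: sum.atMost_Suc)
  finally show ?thesis .
qed



definition gg :: "real \<Rightarrow> nat \<Rightarrow> nat \<Rightarrow> real" where
  "gg l k j = (if j = 0 then 0 else if j \<le> k then - po l k * FF l (j-1) / (l * po l (j-1))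
      else po l k * TT l j / (l * po l (j-1)))"

lemma po_rel: "real (Suc i) / (l * po l i) = 1 / po l (Suc i)"
proof -
  have "po l (Suc i) = po l i * l / real (Suc i)" by (rule po_Suc)
  thus ?thesis by simp
qed

lemma FF_0: "FF l 0 = po l 0" by (simp add: FF_def)

lemma stein:
  assumes l: "l > 0"
  shows "l * gg l k (Suc j) - real j * gg l k j = (if j = k then 1 else 0) - po l k"
proof -
  have pj: "po l j > 0" and pk: "po l k > 0" using po_pos[OF l] by auto
  have jg: "real j * gg l k j = (if j \<le> k then - po l k * FF l (j-1) / po l j else po l k * TT l j / po l j)"
    if "j > 0"
  proof -
    obtain i where i: "j = Suc i" using \<open>j > 0\<close> by (cases j) auto
    have r: "real (Suc i) / (l * po l i) = 1 / po l (Suc i)" by (rule po_rel)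
    have "real (Suc i) * (a / (l * po l i)) = a / po l (Suc i)" for a
      using r by (metis times_divide_eq_right mult.commute divide_divide_eq_left times_divide_eq_left mult_1)
    thus ?thesis unfolding gg_def i by (simp add: mult_minus_right)
  qed
  consider (lt) "j < k" | (eq) "j = k" | (gt) "j > k" by linarith
  thus ?thesis
  proof cases
    case lt
    have lg: "l * gg l k (Suc j) = - po l k * FF l j / po l j"
      unfolding gg_def using lt l by simp
    show ?thesis
    proof (cases j)
      case 0
      thus ?thesis using lg lt pj by (simp add: FF_0)
    next
      case (Suc i)
      have "l * gg l k (Suc j) - real j * gg l k j = - po l k * (FF l j - FF l i) / po l j"
        using lg jg lt Suc by (simp add: diff_divide_distrib algebra_simps)
      also have "FF l j - FF l i = po l j" using Suc by (simp add: FF_Suc)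
      finally show ?thesis using pj lt by simp
    qed
  next
    case eq
    have lg: "l * gg l k (Suc j) = TT l (Suc k)"
      unfolding gg_def using eq l pk by simp
    have t: "TT l (Suc k) = 1 - FF l k" using FF_TT[of l k] by simp
    show ?thesis
    proof (cases j)
      case 0
      thus ?thesis using lg eq t by (simp add: FF_0)
    next
      case (Suc i)
      have ki: "k - Suc 0 = i" using eq Suc by simp
      have "real j * gg l k j = - FF l i" using jg eq Suc pk ki by simp
      thus ?thesis using lg eq t Suc FF_Suc[of l i] by simp
    qed
  next
    case gt
    have lg: "l * gg l k (Suc j) = po l k * TT l (Suc j) / po l j"
      unfolding gg_def using gt l by simp
    have "l * gg l k (Suc j) - real j * gg l k j = - po l k * (TT l j - TT l (Suc j)) / po l j"
      using lg jg gt by (simp add: diff_divide_distrib algebra_simps)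
    also have "TT l j - TT l (Suc j) = po l j" using TT_split[of l j] by simp
    finally show ?thesis using pj gt by simp
  qed
qed

lemma delta_le:
  assumes l: "l > 0" and "j = Suc i"
  shows "gg l k (Suc j) - gg l k j \<le> (if k = j then (1 - exp (- l)) / l else 0)"
proof -
  have pi: "po l i > 0" and psi: "po l (Suc i) > 0" and pk: "po l k > 0" using po_pos[OF l] by auto
  consider (lt) "Suc j \<le> k" | (eq) "j = k" | (gt) "k < j" by linarith
  thus ?thesis
  proof cases
    case lt
    have "FF l i / po l i \<le> FF l (Suc i) / po l (Suc i)"
      using FF_mono_ratio[OF l, of i] pi psi by (simp add: divide_simps mult.commute)
    hence "(po l k / l) * (FF l i / po l i) \<le> (po l k / l) * (FF l (Suc i) / po l (Suc i))"
      using pk l by (intro mult_left_mono) auto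
    hence "po l k * FF l i / (l * po l i) \<le> po l k * FF l (Suc i) / (l * po l (Suc i))"
      by simp
    thus ?thesis using lt \<open>j = Suc i\<close> unfolding gg_def by simp
  next
    case eq
    have t: "TT l (Suc k) = 1 - FF l k" using FF_TT[of l k] by simp
    have g1: "gg l k (Suc j) = TT l (Suc k) / l" unfolding gg_def using eq pk l by simp
    have ki: "k - Suc 0 = i" using eq \<open>j = Suc i\<close> by simp
    have "gg l k j = - po l k * FF l i / (l * po l i)" unfolding gg_def using eq \<open>j = Suc i\<close> ki by simp
    also have "\<dots> = - FF l i / real (Suc i)"
      using eq \<open>j = Suc i\<close> po_Suc[of l i] pi l by (simp add: divide_simps)
    finally have g2: "gg l k j = - FF l i / real (Suc i)" .
    have d: "l / real (Suc i) * FF l i \<le> FF l (Suc i) - po l 0" by (rule diag_bound[OF l])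
    have "gg l k (Suc j) - gg l k j = (1 - FF l k + l / real (Suc i) * FF l i) / l"
      unfolding g1 g2 t using l by (simp add: field_simps)
    also have "\<dots> \<le> (1 - po l 0) / l"
      using d eq \<open>j = Suc i\<close> l by (intro divide_right_mono) auto
    finally show ?thesis using eq by (simp add: po_def)
  next
    case gt
    have "TT l (Suc (Suc i)) / po l (Suc i) \<le> TT l (Suc i) / po l i"
      using TT_mono_ratio[OF l, of i] pi psi by (simp add: divide_simps mult.commute)
    hence "(po l k / l) * (TT l (Suc (Suc i)) / po l (Suc i)) \<le> (po l k / l) * (TT l (Suc i) / po l i)"
      using pk l by (intro mult_left_mono) auto
    hence "po l k * TT l (Suc (Suc i)) / (l * po l (Suc i)) \<le> po l k * TT l (Suc i) / (l * po l i)"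
      by simp
    thus ?thesis using gt \<open>j = Suc i\<close> unfolding gg_def by simp
  qed
qed

lemma delta_sum_le:
  assumes l: "l > 0" and "j > 0" and "finite A"
  shows "(\<Sum>k\<in>A. gg l k (Suc j) - gg l k j) \<le> (1 - exp (- l)) / l"
proof -
  obtain i where i: "j = Suc i" using \<open>j > 0\<close> by (cases j) auto
  have "(\<Sum>k\<in>A. gg l k (Suc j) - gg l k j) \<le> (\<Sum>k\<in>A. (if k = j then (1 - exp (- l)) / l else 0))"
    by (rule sum_mono) (rule delta_le[OF l i])
  also have "\<dots> \<le> (1 - exp (- l)) / l"
    using assms l by (simp add: sum.delta[OF \<open>finite A\<close>])
  finally show ?thesis .
qed



definition bb :: "nat \<Rightarrow> real \<Rightarrow> nat \<Rightarrow> real" where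
  "bb n q j = real (n choose j) * q ^ j * (1 - q) ^ (n - j)"

lemma bb_nonneg: "0 \<le> q \<Longrightarrow> q \<le> 1 \<Longrightarrow> 0 \<le> bb n q j"
  by (simp add: bb_def)

lemma bb_sum: "(\<Sum>j\<le>n. bb n q j) = 1"
proof -
  have "(q + (1 - q)) ^ n = (\<Sum>j\<le>n. real (n choose j) * q ^ j * (1 - q) ^ (n - j))"
    by (rule binomial_ring)
  thus ?thesis by (simp add: bb_def)
qed

lemma bb_high: "n < j \<Longrightarrow> bb n q j = 0" by (simp add: bb_def)

lemma bb_X: "real (m choose Suc i) * q ^ Suc i * (1 - q) ^ (m - i) = (1 - q) * bb m q (Suc i)"
proof (cases "i < m")
  case True
  hence "m - i = Suc (m - Suc i)" by simp
  thus ?thesis by (simp add: bb_def)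
next
  case False
  thus ?thesis by (simp add: bb_def)
qed

lemma pascal_sum:
  "(\<Sum>j\<le>Suc m. bb (Suc m) q j * f j) = (1 - q) * (\<Sum>j\<le>m. bb m q j * f j) + q * (\<Sum>j\<le>m. bb m q j * f (Suc j))"
proof -
  have e: "bb (Suc m) q (Suc i) = q * bb m q i + (1 - q) * bb m q (Suc i)" for i
  proof -
    have "bb (Suc m) q (Suc i) = real (m choose i) * q ^ Suc i * (1 - q) ^ (m - i)
           + real (m choose Suc i) * q ^ Suc i * (1 - q) ^ (m - i)"
      by (simp add: bb_def algebra_simps)
    also have "\<dots> = q * bb m q i + (1 - q) * bb m q (Suc i)"
      by (simp only: bb_X) (simp add: bb_def)
    finally show ?thesis .
  qed
  have e0: "bb (Suc m) q 0 = (1 - q) * bb m q 0" by (simp add: bb_def)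
  have "(\<Sum>j\<le>Suc m. bb (Suc m) q j * f j) = bb (Suc m) q 0 * f 0 + (\<Sum>i\<le>m. bb (Suc m) q (Suc i) * f (Suc i))"
    by (simp add: sum.atMost_Suc_shift del: sum.atMost_Suc)
  also have "\<dots> = (1 - q) * (bb m q 0 * f 0 + (\<Sum>i\<le>m. bb m q (Suc i) * f (Suc i))) + q * (\<Sum>i\<le>m. bb m q i * f (Suc i))"
  proof -
    have "(\<Sum>i\<le>m. bb (Suc m) q (Suc i) * f (Suc i)) = q * (\<Sum>i\<le>m. bb m q i * f (Suc i)) + (1 - q) * (\<Sum>i\<le>m. bb m q (Suc i) * f (Suc i))"
      by (simp add: e distrib_right sum.distrib sum_distrib_left mult.assoc)
    thus ?thesis unfolding e0 by (simp add: distrib_left)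
  qed
  also have "bb m q 0 * f 0 + (\<Sum>i\<le>m. bb m q (Suc i) * f (Suc i)) = (\<Sum>j\<le>Suc m. bb m q j * f j)"
    by (simp add: sum.atMost_Suc_shift del: sum.atMost_Suc)
  also have "\<dots> = (\<Sum>j\<le>m. bb m q j * f j)" by (simp add: bb_high)
  finally show ?thesis .
qed

lemma size_bias_sum:
  "(\<Sum>j\<le>Suc m. bb (Suc m) q j * (real j * f j)) = real (Suc m) * q * (\<Sum>j\<le>m. bb m q j * f (Suc j))"
proof -
  have e: "bb (Suc m) q (Suc i) * real (Suc i) = real (Suc m) * q * bb m q i" for i
  proof -
    have c: "real (Suc m choose Suc i) * real (Suc i) = real (Suc m) * real (m choose i)"
      using Suc_times_binomial_eq[of m i] by (metis of_nat_mult)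
    have "bb (Suc m) q (Suc i) * real (Suc i) = (real (Suc m choose Suc i) * real (Suc i)) * (q * q^i * (1-q)^(m-i))"
      by (simp add: bb_def mult_ac del: of_nat_Suc binomial_Suc_Suc)
    also have "\<dots> = real (Suc m) * real (m choose i) * (q * q^i * (1-q)^(m-i))" by (simp only: c)
    also have "\<dots> = real (Suc m) * q * bb m q i" by (simp add: bb_def mult_ac del: of_nat_Suc)
    finally show ?thesis .
  qed
  have "(\<Sum>j\<le>Suc m. bb (Suc m) q j * (real j * f j)) = (\<Sum>i\<le>m. bb (Suc m) q (Suc i) * (real (Suc i) * f (Suc i)))"
    by (simp add: sum.atMost_Suc_shift del: sum.atMost_Suc of_nat_Suc)
  also have "\<dots> = (\<Sum>i\<le>m. real (Suc m) * q * bb m q i * f (Suc i))"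
    by (rule sum.cong) (simp_all add: e[symmetric] del: of_nat_Suc)
  also have "\<dots> = real (Suc m) * q * (\<Sum>j\<le>m. bb m q j * f (Suc j))"
    by (simp add: sum_distrib_left mult.assoc)
  finally show ?thesis .
qed

lemma stein_sum:
  assumes "l = real (Suc m) * q"
  shows "(\<Sum>j\<le>Suc m. bb (Suc m) q j * (l * h (Suc j) - real j * h j))
       = l * q * (\<Sum>j\<le>m. bb m q j * (h (Suc (Suc j)) - h (Suc j)))"
proof -
  have "(\<Sum>j\<le>Suc m. bb (Suc m) q j * (l * h (Suc j) - real j * h j))
      = l * (\<Sum>j\<le>Suc m. bb (Suc m) q j * h (Suc j)) - (\<Sum>j\<le>Suc m. bb (Suc m) q j * (real j * h j))"
    by (simp add: algebra_simps sum_subtractf sum_distrib_left)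
  also have "(\<Sum>j\<le>Suc m. bb (Suc m) q j * h (Suc j)) = (1 - q) * (\<Sum>j\<le>m. bb m q j * h (Suc j)) + q * (\<Sum>j\<le>m. bb m q j * h (Suc (Suc j)))"
    by (rule pascal_sum)
  also have "(\<Sum>j\<le>Suc m. bb (Suc m) q j * (real j * h j)) = l * (\<Sum>j\<le>m. bb m q j * h (Suc j))"
    unfolding assms by (rule size_bias_sum)
  finally show ?thesis by (simp add: algebra_simps sum_subtractf sum_distrib_left)
qed

lemma core_single:
  assumes q: "0 < q" "q \<le> 1" and l: "l = real (Suc m) * q" and k: "k \<le> Suc m"
  shows "bb (Suc m) q k - po l k = l * q * (\<Sum>j\<le>m. bb m q j * (gg l k (Suc (Suc j)) - gg l k (Suc j)))"
proof -
  have lpos: "l > 0" using q l by simp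
  have "(\<Sum>j\<le>Suc m. bb (Suc m) q j * (l * gg l k (Suc j) - real j * gg l k j))
      = (\<Sum>j\<le>Suc m. bb (Suc m) q j * ((if j = k then 1 else 0) - po l k))"
    by (simp add: stein[OF lpos])
  also have "\<dots> = (\<Sum>j\<le>Suc m. (if j = k then bb (Suc m) q j else 0) - bb (Suc m) q j * po l k)"
    by (rule sum.cong) (simp_all add: right_diff_distrib)
  also have "\<dots> = (\<Sum>j\<le>Suc m. (if j = k then bb (Suc m) q j else 0)) - (\<Sum>j\<le>Suc m. bb (Suc m) q j) * po l k"
    by (simp only: sum_subtractf sum_distrib_right)
  also have "\<dots> = bb (Suc m) q k - po l k"
    using k bb_sum[of "Suc m" q] by (simp add: sum.delta' del: sum.atMost_Suc)
  finally show ?thesis using stein_sum[OF l, of "gg l k"] by simp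
qed

lemma core_A:
  assumes q: "0 < q" "q \<le> 1" and l: "l = real (Suc m) * q" and A: "A \<subseteq> {..Suc m}"
  shows "(\<Sum>k\<in>A. bb (Suc m) q k - po l k) \<le> (1 - exp (- l)) * q"
proof -
  have lpos: "l > 0" using q l by simp
  have fA: "finite A" using A finite_subset by blast
  have "(\<Sum>k\<in>A. bb (Suc m) q k - po l k)
      = (\<Sum>k\<in>A. l * q * (\<Sum>j\<le>m. bb m q j * (gg l k (Suc (Suc j)) - gg l k (Suc j))))"
    by (rule sum.cong) (use A core_single[OF q l] in auto)
  also have "\<dots> = l * q * (\<Sum>j\<le>m. bb m q j * (\<Sum>k\<in>A. gg l k (Suc (Suc j)) - gg l k (Suc j)))"
    by (simp add: sum_distrib_left sum.swap[of _ A])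
  also have "\<dots> \<le> l * q * (\<Sum>j\<le>m. bb m q j * ((1 - exp (- l)) / l))"
    using lpos q
    by (intro mult_left_mono sum_mono delta_sum_le fA bb_nonneg) (auto intro!: mult_left_mono delta_sum_le fA bb_nonneg)
  also have "\<dots> = l * q * ((\<Sum>j\<le>m. bb m q j) * ((1 - exp (- l)) / l))"
    by (simp only: sum_distrib_right)
  also have "\<dots> = (1 - exp (- l)) * q"
    using lpos by (simp add: bb_sum)
  finally show ?thesis .
qed



lemma tv_core:
  assumes q: "0 < q" "q \<le> 1" and l: "l = real (Suc m) * q"
  shows "(\<lambda>k. \<bar>bb (Suc m) q k - po l k\<bar>) sums (2 * (\<Sum>k\<in>{k\<in>{..Suc m}. bb (Suc m) q k - po l k > 0}. bb (Suc m) q k - po l k))"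
    and "(\<Sum>k. \<bar>bb (Suc m) q k - po l k\<bar>) \<le> 2 * ((1 - exp (- l)) * q)"
proof -
  have lpos: "l > 0" using q l by simp
  define d where "d k = bb (Suc m) q k - po l k" for k
  define A where "A = {k\<in>{..Suc m}. d k > 0}"
  have "bb (Suc m) q sums (\<Sum>k\<le>Suc m. bb (Suc m) q k)"
    by (rule sums_finite) (auto simp: bb_high simp del: sum.atMost_Suc)
  hence s1: "bb (Suc m) q sums 1" by (simp only: bb_sum)
  have sd: "d sums 0" unfolding d_def using sums_diff[OF s1 po_sums] by simp
  have sm: "(\<lambda>k. max (d k) 0) sums (\<Sum>k\<le>Suc m. max (d k) 0)"
  proof (rule sums_finite)
    fix k assume "k \<notin> {..Suc m}"
    hence "d k < 0" unfolding d_def using bb_high[of "Suc m" k q] po_pos[OF lpos, of k] by simp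
    thus "max (d k) 0 = 0" by simp
  qed simp
  have e: "(\<Sum>k\<le>Suc m. max (d k) 0) = (\<Sum>k\<in>A. d k)"
  proof -
    have "(\<Sum>k\<in>A. d k) = (\<Sum>k\<le>Suc m. if d k > 0 then d k else 0)"
      unfolding A_def by (rule sum.inter_filter) simp
    also have "\<dots> = (\<Sum>k\<le>Suc m. max (d k) 0)"
      by (rule sum.cong) (simp_all add: max_def)
    finally show ?thesis by simp
  qed
  have "(\<lambda>k. 2 * max (d k) 0 - d k) sums (2 * (\<Sum>k\<le>Suc m. max (d k) 0) - 0)"
    by (rule sums_diff[OF sums_mult[OF sm, of 2] sd])
  hence "(\<lambda>k. 2 * max (d k) 0 - d k) sums (2 * (\<Sum>k\<in>A. d k) - 0)" by (simp only: e)
  moreover have "(\<lambda>k. 2 * max (d k) 0 - d k) = (\<lambda>k. \<bar>d k\<bar>)" by (rule ext) (simp add: max_def)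
  ultimately have S: "(\<lambda>k. \<bar>d k\<bar>) sums (2 * (\<Sum>k\<in>A. d k))" by simp
  thus "(\<lambda>k. \<bar>bb (Suc m) q k - po l k\<bar>) sums (2 * (\<Sum>k\<in>{k\<in>{..Suc m}. bb (Suc m) q k - po l k > 0}. bb (Suc m) q k - po l k))"
    unfolding d_def A_def by simp
  have "(\<Sum>k\<in>A. d k) \<le> (1 - exp (- l)) * q"
    unfolding d_def by (rule core_A[OF q l]) (auto simp: A_def)
  thus "(\<Sum>k. \<bar>bb (Suc m) q k - po l k\<bar>) \<le> 2 * ((1 - exp (- l)) * q)"
    using sums_unique[OF S] unfolding d_def by simp
qed



lemma bern_map:
  assumes "M \<noteq> {#}"
  shows "map_pmf (\<lambda>x. x = i) (pmf_of_multiset M) = bernoulli_pmf (count M i / size M)"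
proof (rule pmf_eqI)
  fix b :: bool
  have le: "count M i / size M \<le> 1" using assms
    using count_le_size[of M i] by (simp add: divide_le_eq_1 nonempty_has_size)
  have ge: "0 \<le> count M i / size M" by simp
  have T: "pmf (map_pmf (\<lambda>x. x = i) (pmf_of_multiset M)) True = count M i / size M"
  proof -
    have "pmf (map_pmf (\<lambda>x. x = i) (pmf_of_multiset M)) True = measure_pmf.prob (pmf_of_multiset M) {i}"
      by (simp add: pmf_map vimage_def)
    also have "\<dots> = count M i / size M" using assms by (simp add: measure_pmf_single)
    finally show ?thesis .
  qed
  show "pmf (map_pmf (\<lambda>x. x = i) (pmf_of_multiset M)) b = pmf (bernoulli_pmf (count M i / size M)) b"
  proof (cases b)
    case True thus ?thesis using T le ge by simp
  next
    case False thus ?thesis using T le ge by (simp add: pmf_False_conv_True)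
  qed
qed

lemma count_law:
  assumes "M \<noteq> {#}"
  shows "map_pmf (\<lambda>ds. count (mset ds) i) (replicate_pmf n (pmf_of_multiset M))
         = binomial_pmf n (count M i / size M)"
proof (induction n)
  have le: "count M i / size M \<le> 1" using assms
    using count_le_size[of M i] by (simp add: divide_le_eq_1 nonempty_has_size)
  case 0
  show ?case using le by (simp add: binomial_pmf_0)
next
  have le: "count M i / size M \<le> 1" using assms
    using count_le_size[of M i] by (simp add: divide_le_eq_1 nonempty_has_size)
  case (Suc n)
  have "binomial_pmf (Suc n) (count M i / size M) =
         do {b \<leftarrow> bernoulli_pmf (count M i / size M);
             k \<leftarrow> binomial_pmf n (count M i / size M);
             return_pmf ((if b then 1 else 0) + k)}"
    using le by (intro binomial_pmf_Suc) simp
  also have "\<dots> = do {x \<leftarrow> pmf_of_multiset M; xs \<leftarrow> replicate_pmf n (pmf_of_multiset M);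
             return_pmf ((if x = i then 1 else 0) + count (mset xs) i)}"
    unfolding bern_map[OF assms, symmetric] Suc.IH[symmetric] by (simp add: bind_map_pmf)
  also have "\<dots> = map_pmf (\<lambda>ds. count (mset ds) i) (replicate_pmf (Suc n) (pmf_of_multiset M))"
    by (simp add: map_pmf_def bind_assoc_pmf bind_return_pmf cong: if_cong)
       (intro bind_pmf_cong refl, simp)
  finally show ?case ..
qed

lemma urn_count_gen: "count (mset (concat (map (\<lambda>j. replicate (vs ! j) j) [0..<n]))) i = (if i < n then vs ! i else 0)"
  by (induction n) auto

lemma urn_size_gen: "size (mset (concat (map (\<lambda>j. replicate (vs ! j) j) [0..<n]))) = (\<Sum>j=0..<n. vs ! j)"
  by (induction n) auto

lemma urn_count: "i < length vs \<Longrightarrow> count (urn_balls vs) i = vs ! i"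
  unfolding urn_balls_def by (simp add: urn_count_gen)

lemma urn_size: "size (urn_balls vs) = sum_list vs"
  unfolding urn_balls_def urn_size_gen by (simp add: sum_list_sum_nth)



lemma exch_aux:
  fixes D :: "nat pmf" shows
  "map_pmf (\<lambda>vs. (vs ! i, sum_list vs)) (replicate_pmf (i + Suc r) D)
   = map_pmf (\<lambda>vs. (vs ! 0, sum_list vs)) (replicate_pmf (i + Suc r) D)"
proof -
  have L: "map_pmf (\<lambda>vs. (vs ! i, sum_list vs)) (replicate_pmf (i + Suc r) D)
     = do {xs \<leftarrow> replicate_pmf i D; y \<leftarrow> D; zs \<leftarrow> replicate_pmf r D; return_pmf (y, sum_list xs + (y + sum_list zs))}"
    unfolding replicate_pmf_distrib
    by (simp add: map_pmf_def bind_assoc_pmf bind_return_pmf)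
       (intro bind_pmf_cong refl, auto simp: set_replicate_pmf nth_append)
  have R: "map_pmf (\<lambda>vs. (vs ! 0, sum_list vs)) (replicate_pmf (i + Suc r) D)
     = do {y \<leftarrow> D; xs \<leftarrow> replicate_pmf i D; zs \<leftarrow> replicate_pmf r D; return_pmf (y, y + (sum_list xs + sum_list zs))}"
  proof -
    have "replicate_pmf (i + Suc r) D = replicate_pmf (Suc (i + r)) D" by simp
    thus ?thesis
      by (simp only: replicate_pmf.simps replicate_pmf_distrib)
         (simp add: map_pmf_def bind_assoc_pmf bind_return_pmf)
  qed
  show ?thesis unfolding L R
    by (subst bind_commute_pmf) (intro bind_pmf_cong refl, simp add: add_ac)
qed

lemma exch:
  fixes D :: "nat pmf"
  assumes "i < K"
  shows "map_pmf (\<lambda>vs. (vs ! i, sum_list vs)) (replicate_pmf K D)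
   = map_pmf (\<lambda>vs. (vs ! 0, sum_list vs)) (replicate_pmf K D)"
proof -
  have "K = i + Suc (K - i - 1)" using assms by simp
  thus ?thesis using exch_aux by metis
qed

lemma marg0: "map_pmf (\<lambda>vs. vs ! 0) (replicate_pmf (Suc r) D) = D"
  by (simp add: map_pmf_def bind_assoc_pmf bind_return_pmf bind_return_pmf')

lemma marg:
  fixes D :: "nat pmf"
  assumes "i < K"
  shows "map_pmf (\<lambda>vs. vs ! i) (replicate_pmf K D) = D"
proof -
  have "map_pmf (\<lambda>vs. vs ! i) (replicate_pmf K D) = map_pmf fst (map_pmf (\<lambda>vs. (vs ! i, sum_list vs)) (replicate_pmf K D))"
    by (simp add: pmf.map_comp o_def)
  also have "\<dots> = map_pmf fst (map_pmf (\<lambda>vs. (vs ! 0, sum_list vs)) (replicate_pmf K D))"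
    by (simp only: exch[OF assms])
  also have "\<dots> = map_pmf (\<lambda>vs. vs ! 0) (replicate_pmf (Suc (K - 1)) D)"
    using assms by (simp add: pmf.map_comp o_def)
  also have "\<dots> = D" by (rule marg0)
  finally show ?thesis .
qed



lemma intb:
  fixes f :: "'a \<Rightarrow> real"
  assumes "AE x in measure_pmf M. \<bar>f x\<bar> \<le> B"
  shows "integrable (measure_pmf M) f"
  by (rule measure_pmf.integrable_const_bound[where B=B]) (use assms in auto)

lemma bb_le1: "0 \<le> q \<Longrightarrow> q \<le> 1 \<Longrightarrow> bb n q k \<le> 1"
proof (cases "k \<le> n")
  case True
  assume q: "0 \<le> q" "q \<le> 1"
  have "bb n q k \<le> (\<Sum>j\<le>n. bb n q j)"
    by (rule member_le_sum) (use True q bb_nonneg in auto)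
  thus ?thesis by (simp add: bb_sum)
qed (simp add: bb_high)

lemma po_le1: assumes "0 \<le> l" shows "0 \<le> po l k \<and> po l k \<le> 1"
proof
  show "0 \<le> po l k" using assms by (simp add: po_def)
  have "sum (po l) {k} \<le> suminf (po l)"
    by (rule sum_le_suminf[OF po_summable]) (use assms in \<open>auto simp: po_def\<close>)
  thus "po l k \<le> 1" using sums_unique[OF po_sums] by simp
qed

lemma vs_facts:
  fixes D :: "nat pmf"
  assumes vs: "vs \<in> set_pmf (replicate_pmf K D)" and D0: "0 \<notin> set_pmf D" and i: "i < K"
    and p: "0 < p" and Z: "p * real (sum_list vs) \<in> \<int>"
  shows "0 < vs ! i" "vs ! i \<le> sum_list vs"
    "\<exists>m. nat \<lfloor>p * real (sum_list vs)\<rfloor> = Suc m \<and> real (Suc m) = p * real (sum_list vs)"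
proof -
  have len: "length vs = K" and sub: "set vs \<subseteq> set_pmf D" using vs by (auto simp: set_replicate_pmf)
  have mem: "vs ! i \<in> set vs" using len i by simp
  show pos: "0 < vs ! i" using mem sub D0 by (metis gr0I subsetD)
  show le: "vs ! i \<le> sum_list vs" using len i by (simp add: elem_le_sum_list)
  obtain z where z: "p * real (sum_list vs) = real_of_int z" using Z Ints_cases by metis
  have "p * real (sum_list vs) > 0" using pos le p by simp
  hence zpos: "z > 0" using z by simp
  have "nat \<lfloor>p * real (sum_list vs)\<rfloor> = Suc (nat z - 1)" using z zpos by simp
  moreover have "real (Suc (nat z - 1)) = p * real (sum_list vs)" using z zpos by simp
  ultimately show "\<exists>m. nat \<lfloor>p * real (sum_list vs)\<rfloor> = Suc m \<and> real (Suc m) = p * real (sum_list vs)"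
    by blast
qed



theorem mainTheorem1:
  fixes D :: "nat pmf" and K :: nat and p :: real and i :: nat
  assumes "0 \<notin> set_pmf D"
    and "K \<ge> 1"
    and "0 < p" and "p < 1"
    and "\<forall>vs \<in> set_pmf (replicate_pmf K D). p * real (sum_list vs) \<in> \<int>"
    and "i < K"
  shows "tv_dist (drawn_count_law D K p i) (mixed_poisson D p)
     \<le> measure_pmf.expectation (replicate_pmf K D)
          (\<lambda>vs. min (p * real (vs ! 0)) 1 * real (vs ! 0) / real (sum_list vs))"
proof -
  define R where "R = replicate_pmf K D"
  define N where "N vs = nat \<lfloor>p * real (sum_list vs)\<rfloor>" for vs
  define qv where "qv vs = real (vs ! i) / real (sum_list vs)" for vs
  define lv where "lv vs = p * real (vs ! i)" for vs
  define G where "G vs = min (p * real (vs ! i)) 1 * real (vs ! i) / real (sum_list vs)" for vs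
  define B where "B vs k = bb (N vs) (qv vs) k" for vs k
  define P where "P vs k = po (lv vs) k" for vs k
  have facts: "0 < qv vs \<and> qv vs \<le> 1 \<and> (\<exists>m. N vs = Suc m \<and> lv vs = real (Suc m) * qv vs) \<and>
      urn_balls vs \<noteq> {#} \<and> real (count (urn_balls vs) i) / real (size (urn_balls vs)) = qv vs"
    if vs: "vs \<in> set_pmf R" for vs
  proof -
    have vs': "vs \<in> set_pmf (replicate_pmf K D)" using vs by (simp add: R_def)
    note f = vs_facts[OF vs' assms(1) assms(6) assms(3) assms(5)[rule_format, OF vs']]
    obtain m where m: "N vs = Suc m" "real (Suc m) = p * real (sum_list vs)" using f(3) N_def by auto
    have len: "length vs = K" using vs' by (auto simp: set_replicate_pmf)
    have Vpos: "real (sum_list vs) > 0" using f(1,2) by simp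
    have Vn: "sum_list vs > 0" using f(1,2) by linarith
    have Vne: "real (sum_list vs) \<noteq> 0" using Vpos by linarith
    have gen: "\<And>a S::real. S \<noteq> 0 \<Longrightarrow> p * a = (p * S) * (a / S)" by simp
    have "lv vs = real (Suc m) * qv vs" unfolding lv_def qv_def m(2) by (rule gen[OF Vne])
    moreover have "0 < qv vs" "qv vs \<le> 1" using f(1,2) Vpos by (auto simp: qv_def)
    moreover have "urn_balls vs \<noteq> {#}"
    proof
      assume "urn_balls vs = {#}"
      hence "size (urn_balls vs) = 0" by simp
      thus False using Vn urn_size[of vs] by linarith
    qed
    moreover have "real (count (urn_balls vs) i) / real (size (urn_balls vs)) = qv vs"
      using urn_count[of i vs] len assms(6) urn_size[of vs] by (simp add: qv_def)
    ultimately show ?thesis using m by blast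
  qed
  have mu: "drawn_count_law D K p i = bind_pmf R (\<lambda>vs. binomial_pmf (N vs) (qv vs))"
  proof -
    have "drawn_count_law D K p i = bind_pmf R (\<lambda>vs. map_pmf (\<lambda>ds. count (mset ds) i)
             (replicate_pmf (N vs) (pmf_of_multiset (urn_balls vs))))"
      by (simp add: drawn_count_law_def urn_experiment_def R_def N_def map_pmf_def bind_assoc_pmf bind_return_pmf)
    also have "\<dots> = bind_pmf R (\<lambda>vs. binomial_pmf (N vs) (qv vs))"
    proof (intro bind_pmf_cong refl)
      fix vs assume "vs \<in> set_pmf R"
      thus "map_pmf (\<lambda>ds. count (mset ds) i) (replicate_pmf (N vs) (pmf_of_multiset (urn_balls vs)))
            = binomial_pmf (N vs) (qv vs)"
        using facts count_law by metis
    qed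
    finally show ?thesis .
  qed
  have pmu: "pmf (drawn_count_law D K p i) k = (\<integral>vs. B vs k \<partial>R)" for k
    unfolding mu pmf_bind
    by (rule integral_cong_AE) (auto simp: AE_measure_pmf_iff B_def bb_def facts less_imp_le)
  have mp: "mixed_poisson D p k = (\<integral>vs. P vs k \<partial>R)" for k
  proof -
    have "mixed_poisson D p k = (\<integral>v. po (p * real v) k \<partial>D)" unfolding mixed_poisson_def po_def by simp
    also have "\<dots> = (\<integral>v. po (p * real v) k \<partial>(map_pmf (\<lambda>vs. vs ! i) R))"
      using marg[OF assms(6)] R_def by simp
    also have "\<dots> = (\<integral>vs. P vs k \<partial>R)" by (simp add: P_def lv_def)
    finally show ?thesis .
  qed
  have ptw: "summable (\<lambda>k. \<bar>B vs k - P vs k\<bar>) \<and> (\<Sum>k. \<bar>B vs k - P vs k\<bar>) \<le> 2 * G vs"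
    if vs: "vs \<in> set_pmf R" for vs
  proof -
    obtain m where m: "N vs = Suc m" "lv vs = real (Suc m) * qv vs" using facts[OF vs] by blast
    have q: "0 < qv vs" "qv vs \<le> 1" using facts[OF vs] by auto
    note tc = tv_core[OF q m(2)]
    have s: "summable (\<lambda>k. \<bar>B vs k - P vs k\<bar>)"
      using sums_summable[OF tc(1)] by (simp add: B_def P_def m(1))
    have l0: "lv vs \<ge> 0" using assms(3) by (simp add: lv_def)
    have e1: "1 - exp (- lv vs) \<le> min (lv vs) 1"
      using exp_ge_add_one_self[of "- lv vs"] exp_gt_zero[of "- lv vs"] by simp
    have "2 * ((1 - exp (- lv vs)) * qv vs) \<le> 2 * (min (lv vs) 1 * qv vs)"
      using e1 q by (intro mult_left_mono mult_right_mono) auto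
    also have "\<dots> = 2 * G vs" by (simp add: G_def lv_def qv_def)
    finally show ?thesis using s tc(2) by (simp add: B_def P_def m(1))
  qed
  have Bb: "0 \<le> B vs k \<and> B vs k \<le> 1" if "vs \<in> set_pmf R" for vs k
    using facts[OF that] by (simp add: B_def bb_nonneg bb_le1)
  have Pb: "0 \<le> P vs k \<and> P vs k \<le> 1" for vs k
    using po_le1[of "lv vs" k] assms(3) by (simp add: P_def lv_def)
  have Gb: "0 \<le> G vs \<and> G vs \<le> 1" if "vs \<in> set_pmf R" for vs
  proof -
    have q: "0 < qv vs" "qv vs \<le> 1" using facts[OF that] by auto
    have "G vs = min (p * real (vs ! i)) 1 * qv vs" by (simp add: G_def qv_def)
    moreover have "min (p * real (vs ! i)) 1 * qv vs \<le> 1 * 1"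
      using q by (intro mult_mono) auto
    moreover have "0 \<le> min (p * real (vs ! i)) 1" using assms(3) by simp
    ultimately show ?thesis using q by simp
  qed
  have intB: "integrable R (\<lambda>vs. B vs k)" for k
    by (rule intb[where B=1]) (use Bb in \<open>auto simp: AE_measure_pmf_iff\<close>)
  have intP: "integrable R (\<lambda>vs. P vs k)" for k
    by (rule intb[where B=1]) (use Pb in \<open>auto simp: AE_measure_pmf_iff\<close>)
  have intG: "integrable R G"
    by (rule intb[where B=1]) (use Gb in \<open>auto simp: AE_measure_pmf_iff\<close>)
  have intA: "integrable R (\<lambda>vs. \<bar>B vs k - P vs k\<bar>)" for k
    using intB intP by auto
  have part: "(\<Sum>k<n. \<bar>pmf (drawn_count_law D K p i) k - mixed_poisson D p k\<bar>) \<le> (\<integral>vs. 2 * G vs \<partial>R)" for n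
  proof -
    have d: "pmf (drawn_count_law D K p i) k - mixed_poisson D p k = (\<integral>vs. B vs k - P vs k \<partial>R)" for k
      unfolding pmu mp by (rule Bochner_Integration.integral_diff[OF intB intP, symmetric])
    have "(\<Sum>k<n. \<bar>pmf (drawn_count_law D K p i) k - mixed_poisson D p k\<bar>)
        = (\<Sum>k<n. \<bar>\<integral>vs. B vs k - P vs k \<partial>R\<bar>)"
      by (simp only: d)
    also have "\<dots> \<le> (\<Sum>k<n. \<integral>vs. \<bar>B vs k - P vs k\<bar> \<partial>R)"
    proof (rule sum_mono)
      fix k
      show "\<bar>\<integral>vs. B vs k - P vs k \<partial>R\<bar> \<le> (\<integral>vs. \<bar>B vs k - P vs k\<bar> \<partial>R)"
        using integral_norm_bound[of R "\<lambda>vs. B vs k - P vs k"] by (simp only: real_norm_def)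
    qed
    also have "\<dots> = (\<integral>vs. (\<Sum>k<n. \<bar>B vs k - P vs k\<bar>) \<partial>R)"
      by (rule Bochner_Integration.integral_sum[symmetric]) (rule intA)
    also have "\<dots> \<le> (\<integral>vs. 2 * G vs \<partial>R)"
    proof (rule integral_mono_AE)
      show "integrable R (\<lambda>vs. \<Sum>k<n. \<bar>B vs k - P vs k\<bar>)" using intA by auto
      show "integrable R (\<lambda>vs. 2 * G vs)" using intG by auto
      show "AE vs in R. (\<Sum>k<n. \<bar>B vs k - P vs k\<bar>) \<le> 2 * G vs"
        unfolding AE_measure_pmf_iff
      proof
        fix vs assume vs: "vs \<in> set_pmf R"
        have "(\<Sum>k<n. \<bar>B vs k - P vs k\<bar>) \<le> (\<Sum>k. \<bar>B vs k - P vs k\<bar>)"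
          using ptw[OF vs] by (intro sum_le_suminf) auto
        thus "(\<Sum>k<n. \<bar>B vs k - P vs k\<bar>) \<le> 2 * G vs" using ptw[OF vs] by linarith
      qed
    qed
    finally show ?thesis .
  qed
  have summ: "summable (\<lambda>k. \<bar>pmf (drawn_count_law D K p i) k - mixed_poisson D p k\<bar>)"
    by (rule summableI_nonneg_bounded[OF _ part]) simp
  have "(\<Sum>k. \<bar>pmf (drawn_count_law D K p i) k - mixed_poisson D p k\<bar>) \<le> (\<integral>vs. 2 * G vs \<partial>R)"
    by (rule suminf_le_const[OF summ part])
  hence "tv_dist (drawn_count_law D K p i) (mixed_poisson D p) \<le> (\<integral>vs. G vs \<partial>R)"
    unfolding tv_dist_def by simp
  also have "(\<integral>vs. G vs \<partial>R) = (\<integral>x. min (p * real (fst x)) 1 * real (fst x) / real (snd x)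
        \<partial>(map_pmf (\<lambda>vs. (vs ! i, sum_list vs)) R))"
    by (simp add: G_def)
  also have "\<dots> = (\<integral>x. min (p * real (fst x)) 1 * real (fst x) / real (snd x)
        \<partial>(map_pmf (\<lambda>vs. (vs ! 0, sum_list vs)) R))"
    unfolding R_def exch[OF assms(6)] ..
  also have "\<dots> = measure_pmf.expectation (replicate_pmf K D)
          (\<lambda>vs. min (p * real (vs ! 0)) 1 * real (vs ! 0) / real (sum_list vs))"
    by (simp add: R_def)
  finally show ?thesis .
qed


end
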